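(* Let $\varphi\in\mathrm{Out}(F_N)$ be a hyperbolic iwip with fixed representatives $T_\pm,\mu_\pm$ as in the context, and put $V_+=\{[T]\in\overline{CV}_N:\langle T,\mu_-\rangle<\langle T,\mu_+\rangle\}$, $V_-=\{[T]\in\overline{CV}_N:\langle T,\mu_-\rangle>\langle T,\mu_+\rangle\}$. Then: (1) $V_+,V_-$ are open neighborhoods of $[T_+]$, $[T_-]$ respectively, with $V_+\varphi\subseteq V_+$ and $V_-\varphi^{-1}\subseteq V_-$; (2) $\bigcap_{n\ge1}\overline{V}_+\varphi^n=\{[T_+]\}$ and $\bigcap_{n\ge1}\overline{V}_-\varphi^{-n}=\{[T_-]\}$; (3) for every neighborhood $V$ of $[T_+]$ there is $n\ge1$ with $V_+\varphi^n\subseteq V$, and for every neighborhood $V'$ of $[T_-]$ there is $n\ge1$ with $V_-\varphi^{-n}\subseteq V'$; (4) for all neighborhoods $V$ of $[T_+]$ and $V'$ of $[T_-]$ there is $M\ge1$ with $(\overline{CV}_N\smallsetminus V')\varphi^n\subseteq V$ and $(\overline{CV}_N\smallsetminus V)\varphi^{-n}\subseteq V'$ for all $n\ge M$; (5) the action of $\langle\varphi\rangle$ on $\overline{CV}_N\smallsetminus\{[T_+],[T_-]\}$ is properly discontinuous and cocompact.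
   Context: $F_N$ is the free group of rank $N\ge3$; $\overline{cv}_N$ is the space of very small minimal isometric actions of $F_N$ on $\mathbb R$-trees, with right $\mathrm{Out}(F_N)$-action $\|g\|_{T\varphi}=\|\Phi(g)\|_T$, and $\overline{CV}_N$ its (compact) projectivization; $\mathrm{Curr}(F_N)$ is the space of geodesic currents with its left linear $\mathrm{Out}(F_N)$-action. The intersection form $\langle\cdot,\cdot\rangle:\overline{cv}_N\times\mathrm{Curr}(F_N)\to\mathbb R_{\ge0}$ is the unique continuous map that is $\mathbb R_{\ge0}$-linear in the current, satisfies $\langle cT,\mu\rangle=c\langle T,\mu\rangle$, $\langle T\varphi,\mu\rangle=\langle T,\varphi\mu\rangle$, and $\langle T,\eta_g\rangle=\|g\|_T$. A hyperbolic iwip $\varphi$ (no positive power fixes a conjugacy class of a proper free factor or of a nontrivial element) has trees $T_\pm$ and currents $\mu_\pm$ (fixed representatives of its attracting/repelling projective fixed points) with $T_+\varphi=\lambda_+T_+$, $T_-\varphi=\lambda_-^{-1}T_-$, $\varphi\mu_+=\lambda_+\mu_+$, $\varphi^{-1}\mu_-=\lambda_-\mu_-$, $\lambda_\pm>1$; $[T_\pm]$ are the only fixed points of $\varphi$ in $\overline{CV}_N$, $[T\varphi^n]\to[T_+]$ for $[T]\ne[T_-]$ and $[T\varphi^{-n}]\to[T_-]$ for $[T]\ne[T_+]$; and $\langle T,\mu_+\rangle=0$ iff $[T]=[T_-]$, $\langle T,\mu_-\rangle=0$ iff $[T]=[T_+]$. *)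

theory Defs
  imports "HOL-Analysis.Analysis"
begin

text \<open>Abstract rendering of the setting: 'T models cv_N (with topology cvtop),
'P models the projectivization CV_N-bar (topology PT), pr is the projection
T \<mapsto> [T], 'C models Curr(F_N) (topology Ctop).\<close>

definition nbhd :: "'a topology \<Rightarrow> 'a \<Rightarrow> 'a set \<Rightarrow> bool" where
  "nbhd X x V \<longleftrightarrow> V \<subseteq> topspace X \<and> (\<exists>U. openin X U \<and> x \<in> U \<and> U \<subseteq> V)"

definition pimg :: "'T topology \<Rightarrow> ('T \<Rightarrow> 'P) \<Rightarrow> ('T \<Rightarrow> 'T) \<Rightarrow> 'P set \<Rightarrow> 'P set" where
  "pimg X pr f A = {pr (f T) | T. T \<in> topspace X \<and> pr T \<in> A}"

text \<open>Integer powers: zpow f g n = f^n for n \<ge> 0 and g^(-n) for n < 0 (g = inverse of f).\<close>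
definition zpow :: "('a \<Rightarrow> 'a) \<Rightarrow> ('a \<Rightarrow> 'a) \<Rightarrow> int \<Rightarrow> 'a \<Rightarrow> 'a" where
  "zpow f g n = (if n \<ge> 0 then f ^^ nat n else g ^^ nat (- n))"

definition properly_discontinuous ::
    "'a topology \<Rightarrow> (int \<Rightarrow> 'a set \<Rightarrow> 'a set) \<Rightarrow> 'a set \<Rightarrow> bool" where
  "properly_discontinuous X act Y \<longleftrightarrow>
     (\<forall>K. compactin X K \<and> K \<subseteq> Y \<longrightarrow> finite {n. act n K \<inter> K \<noteq> {}})"

definition cocompact :: "'a topology \<Rightarrow> (int \<Rightarrow> 'a set \<Rightarrow> 'a set) \<Rightarrow> 'a set \<Rightarrow> bool" where
  "cocompact X act Y \<longleftrightarrow> (\<exists>K. compactin X K \<and> K \<subseteq> Y \<and> (\<Union>n. act n K) = Y)"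

end

theory Submission imports Defs begin

definition pcone :: "(real \<times> real) set \<Rightarrow> bool" where
  "pcone D \<longleftrightarrow> (\<forall>c>0. \<forall>x y. ((c*x, c*y) \<in> D \<longleftrightarrow> (x,y) \<in> D))"

definition LT :: "real \<Rightarrow> real \<Rightarrow> (real \<times> real) set" where
  "LT u v = {p. u * fst p < v * snd p}"
definition LE :: "real \<Rightarrow> real \<Rightarrow> (real \<times> real) set" where
  "LE u v = {p. u * fst p \<le> v * snd p}"

lemma pcone_LT: "pcone (LT u v)"
  unfolding pcone_def LT_def
  by (auto simp: mult.left_commute[of u] mult.left_commute[of v])

lemma pcone_LE: "pcone (LE u v)"
  unfolding pcone_def LE_def
  by (auto simp: mult.left_commute[of u] mult.left_commute[of v])

lemma pcone_Int: "pcone A \<Longrightarrow> pcone B \<Longrightarrow> pcone (A \<inter> B)"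
  unfolding pcone_def by auto

lemma open_LT: "open (LT u v)"
  unfolding LT_def by (intro open_Collect_less continuous_intros)

lemma compact_incr:
  fixes W :: "nat \<Rightarrow> 'a set"
  assumes "compactin X K" "\<And>n. openin X (W n)" "\<And>m n. m \<le> n \<Longrightarrow> W m \<subseteq> W n"
    "K \<subseteq> (\<Union>n. W n)"
  shows "\<exists>N. K \<subseteq> W N"
proof -
  obtain F where F: "finite F" "F \<subseteq> range W" "K \<subseteq> \<Union>F"
    using assms(1,2,4) unfolding compactin_def by (metis imageE)
  then obtain J where J: "finite J" "F = W ` J"
    by (meson finite_subset_image)
  have "\<And>j. j \<in> J \<Longrightarrow> W j \<subseteq> W (Max (insert 0 J))"
    using J(1) by (meson Max_ge finite_insert insertCI assms(3))
  then have "\<Union>F \<subseteq> W (Max (insert 0 J))"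
    using J by auto
  then show ?thesis using F by blast
qed

lemma ar1: "(R::real) > 1 \<Longrightarrow> x \<ge> 0 \<Longrightarrow> m \<le> n \<Longrightarrow> R^m * x \<le> R^n * x"
  by (intro mult_right_mono power_increasing) auto

lemma ar2:
  fixes R x y :: real
  assumes "R > 1" "x \<ge> 0" "R^n * x < R^k * y" "N + k \<le> n"
  shows "R^N * x \<le> y"
proof -
  have e: "R^n = R^k * R^(n-k)" using assms(4) by (simp add: power_add[symmetric])
  have "R^k > 0" using assms(1) by simp
  then have "R^(n-k) * x < y" using assms(3) e by (simp add: mult.assoc)
  moreover have "R^N * x \<le> R^(n-k) * x" using ar1[OF assms(1,2)] assms(4) by simp
  ultimately show ?thesis by simp
qed

lemma ar3:
  fixes R x y :: real
  assumes "R > 1" "x \<ge> 0" "y \<ge> 0" "R^m * x < R^k * y" "y < R^k * x"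
  shows "m < 2*k"
proof -
  have x: "x > 0"
  proof (rule ccontr)
    assume "\<not> x > 0"
    then have "x = 0" using assms(2) by simp
    then show False using assms(3,5) by simp
  qed
  have "R^k * y \<le> R^k * (R^k * x)" using assms(1,5) by simp
  moreover have "R^(2*k) * x = R^k * (R^k * x)" by (simp add: mult_2 power_add mult.assoc)
  ultimately have "R^m * x < R^(2*k) * x" using assms(4) by linarith
  then have "R^m < R^(2*k)" using x by simp
  then show ?thesis using assms(1) by (simp add: power_strict_increasing_iff)
qed

lemma arch': "(R::real) > 1 \<Longrightarrow> x > 0 \<Longrightarrow> \<exists>n. y < R^n * x"
proof -
  assume R: "R > 1" and x: "x > 0"
  obtain n where "y / x < R^n" using real_arch_pow[OF R] by blast
  then show ?thesis using x by (auto simp: field_simps)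
qed

locale side =
  fixes cvtop :: "'T topology" and PT :: "'P topology" and pr :: "'T \<Rightarrow> 'P"
    and scal :: "real \<Rightarrow> 'T \<Rightarrow> 'T" and I :: "'T \<Rightarrow> 'C \<Rightarrow> real"
    and f g :: "'T \<Rightarrow> 'T" and a b :: 'C and \<alpha> \<beta> :: real and Tp Tm :: 'T
  assumes quot: "quotient_map cvtop PT pr"
    and pr_eq: "\<And>S T. S \<in> topspace cvtop \<Longrightarrow> T \<in> topspace cvtop \<Longrightarrow>
                  pr S = pr T \<longleftrightarrow> (\<exists>c>0. S = scal c T)"
    and compact: "compact_space PT"
    and cont_a: "continuous_map cvtop euclideanreal (\<lambda>T. I T a)"
    and cont_b: "continuous_map cvtop euclideanreal (\<lambda>T. I T b)"
    and nn_a: "\<And>T. T \<in> topspace cvtop \<Longrightarrow> I T a \<ge> 0"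
    and nn_b: "\<And>T. T \<in> topspace cvtop \<Longrightarrow> I T b \<ge> 0"
    and sc_a: "\<And>c T. c > 0 \<Longrightarrow> T \<in> topspace cvtop \<Longrightarrow> I (scal c T) a = c * I T a"
    and sc_b: "\<And>c T. c > 0 \<Longrightarrow> T \<in> topspace cvtop \<Longrightarrow> I (scal c T) b = c * I T b"
    and f_in: "\<And>T. T \<in> topspace cvtop \<Longrightarrow> f T \<in> topspace cvtop"
    and g_in: "\<And>T. T \<in> topspace cvtop \<Longrightarrow> g T \<in> topspace cvtop"
    and fg: "\<And>T. T \<in> topspace cvtop \<Longrightarrow> f (g T) = T"
    and gf: "\<And>T. T \<in> topspace cvtop \<Longrightarrow> g (f T) = T"
    and fa: "\<And>S. S \<in> topspace cvtop \<Longrightarrow> I (f S) a = \<alpha> * I S a"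
    and fb: "\<And>S. S \<in> topspace cvtop \<Longrightarrow> I S b = \<beta> * I (f S) b"
    and ga: "\<And>S. S \<in> topspace cvtop \<Longrightarrow> I S a = \<alpha> * I (g S) a"
    and gb: "\<And>S. S \<in> topspace cvtop \<Longrightarrow> I (g S) b = \<beta> * I S b"
    and Tp_in: "Tp \<in> topspace cvtop" and Tm_in: "Tm \<in> topspace cvtop"
    and zero_a: "\<And>T. T \<in> topspace cvtop \<Longrightarrow> I T a = 0 \<longleftrightarrow> pr T = pr Tm"
    and zero_b: "\<And>T. T \<in> topspace cvtop \<Longrightarrow> I T b = 0 \<longleftrightarrow> pr T = pr Tp"
    and dist: "pr Tp \<noteq> pr Tm"
    and \<alpha>_gt: "\<alpha> > 1" and \<beta>_gt: "\<beta> > 1"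
begin

abbreviation "cv \<equiv> topspace cvtop"

definition Pset :: "(real \<times> real) set \<Rightarrow> 'P set" where
  "Pset D = {pr S | S. S \<in> cv \<and> (I S b, I S a) \<in> D}"

lemma top_eq: "topspace PT = pr ` cv"
  using quot unfolding quotient_map_def by auto

lemma pr_in: "S \<in> cv \<Longrightarrow> pr S \<in> topspace PT"
  using top_eq by auto

lemma mem_Pset:
  assumes "S \<in> cv" "pcone D"
  shows "pr S \<in> Pset D \<longleftrightarrow> (I S b, I S a) \<in> D"
proof
  assume "pr S \<in> Pset D"
  then obtain T where T: "T \<in> cv" "(I T b, I T a) \<in> D" "pr S = pr T"
    unfolding Pset_def by auto
  then obtain c where c: "c > 0" "S = scal c T" using pr_eq assms(1) by blast
  show "(I S b, I S a) \<in> D"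
    using T c sc_a sc_b assms(2) unfolding pcone_def by auto
qed (auto simp: Pset_def assms)

lemma Pset_sub: "Pset D \<subseteq> topspace PT"
  unfolding Pset_def using pr_in by auto

lemma Pset_mono:
  assumes "\<And>x y. x \<ge> 0 \<Longrightarrow> y \<ge> 0 \<Longrightarrow> (x,y) \<in> D \<Longrightarrow> (x,y) \<in> D'"
  shows "Pset D \<subseteq> Pset D'"
proof
  fix z assume "z \<in> Pset D"
  then obtain S where S: "S \<in> cv" "z = pr S" "(I S b, I S a) \<in> D" unfolding Pset_def by auto
  have "(I S b, I S a) \<in> D'" using assms[OF nn_b[OF S(1)] nn_a[OF S(1)] S(3)] .
  then show "z \<in> Pset D'" using S unfolding Pset_def by blast
qed

lemma Pset_Int:
  assumes "pcone A" "pcone B" shows "Pset (A \<inter> B) = Pset A \<inter> Pset B"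
proof (intro set_eqI iffI)
  fix z assume "z \<in> Pset (A \<inter> B)"
  then show "z \<in> Pset A \<inter> Pset B" unfolding Pset_def by blast
next
  fix z assume z: "z \<in> Pset A \<inter> Pset B"
  then obtain S where S: "S \<in> cv" "z = pr S" unfolding Pset_def by blast
  have "(I S b, I S a) \<in> A" "(I S b, I S a) \<in> B" using z S mem_Pset assms by auto
  then show "z \<in> Pset (A \<inter> B)" using S unfolding Pset_def by blast
qed

lemma cont_pair: "continuous_map cvtop euclidean (\<lambda>S. (I S b, I S a))"
  using continuous_map_pairedI[OF cont_b cont_a] by simp

lemma open_Pset:
  assumes "pcone D" "open D"
  shows "openin PT (Pset D)"
proof -
  have "{S \<in> cv. pr S \<in> Pset D} = {S \<in> cv. (I S b, I S a) \<in> D}"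
    using mem_Pset assms(1) by auto
  moreover have "openin cvtop {S \<in> cv. (I S b, I S a) \<in> D}"
    using openin_continuous_map_preimage[OF cont_pair] assms(2) by auto
  moreover have "openin cvtop {S \<in> cv. pr S \<in> Pset D} \<longleftrightarrow> openin PT (Pset D)"
    using quot Pset_sub[of D] unfolding quotient_map_def by blast
  ultimately show ?thesis by simp
qed

lemma closed_Pset_LE: "closedin PT (Pset (LE u v))"
proof -
  have "topspace PT - Pset (LE u v) = Pset (LT (-u) (-v))"
  proof (intro set_eqI iffI)
    fix z assume z: "z \<in> topspace PT - Pset (LE u v)"
    then obtain S where S: "S \<in> cv" "z = pr S" using top_eq by auto
    then have "\<not> (I S b, I S a) \<in> LE u v" using z mem_Pset[OF S(1) pcone_LE] by auto
    then have "(I S b, I S a) \<in> LT (-u) (-v)" by (auto simp: LE_def LT_def)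
    then show "z \<in> Pset (LT (-u) (-v))" using S mem_Pset[OF S(1) pcone_LT] by auto
  next
    fix z assume z: "z \<in> Pset (LT (-u) (-v))"
    then obtain S where S: "S \<in> cv" "z = pr S" "(I S b, I S a) \<in> LT (-u) (-v)" unfolding Pset_def by auto
    then have "\<not> (I S b, I S a) \<in> LE u v" by (auto simp: LE_def LT_def)
    then show "z \<in> topspace PT - Pset (LE u v)" using S mem_Pset[OF S(1) pcone_LE] pr_in by auto
  qed
  then show ?thesis
    using open_Pset[OF pcone_LT open_LT] Pset_sub
    by (metis closedin_def)
qed

lemma fpow_in: "T \<in> cv \<Longrightarrow> (f^^n) T \<in> cv"
  by (induct n) (auto simp: f_in)
lemma gpow_in: "T \<in> cv \<Longrightarrow> (g^^n) T \<in> cv"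
  by (induct n) (auto simp: g_in)
lemma fgpow: "T \<in> cv \<Longrightarrow> (f^^n) ((g^^n) T) = T"
proof (induct n arbitrary: T)
  case (Suc n)
  have "(f^^Suc n) ((g^^Suc n) T) = (f^^n) (f (g ((g^^n) T)))"
    by (metis comp_apply funpow_Suc_right funpow.simps(2))
  then show ?case using Suc fg gpow_in by simp
qed simp
lemma gfpow: "T \<in> cv \<Longrightarrow> (g^^n) ((f^^n) T) = T"
proof (induct n arbitrary: T)
  case (Suc n)
  have "(g^^Suc n) ((f^^Suc n) T) = (g^^n) (g (f ((f^^n) T)))"
    by (metis comp_apply funpow_Suc_right funpow.simps(2))
  then show ?case using Suc gf fpow_in by simp
qed simp
lemma fpow_a: "S \<in> cv \<Longrightarrow> I ((f^^n) S) a = \<alpha>^n * I S a"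
  by (induct n) (auto simp: fa fpow_in)
lemma fpow_b: "S \<in> cv \<Longrightarrow> I S b = \<beta>^n * I ((f^^n) S) b"
  by (induct n) (auto simp: fb[OF fpow_in])
lemma gpow_a: "S \<in> cv \<Longrightarrow> I S a = \<alpha>^n * I ((g^^n) S) a"
  by (induct n) (auto simp: ga[OF gpow_in])
lemma gpow_b: "S \<in> cv \<Longrightarrow> I ((g^^n) S) b = \<beta>^n * I S b"
  by (induct n) (auto simp: gb gpow_in)

lemma pimg_mono: "A \<subseteq> B \<Longrightarrow> pimg cvtop pr h A \<subseteq> pimg cvtop pr h B"
  unfolding pimg_def by auto

lemma img_f:
  assumes "pcone D"
  shows "pimg cvtop pr (f^^n) (Pset D) = Pset {p. (\<beta>^n * fst p, snd p / \<alpha>^n) \<in> D}"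
proof (intro set_eqI iffI)
  have ap: "\<alpha>^n > 0" using \<alpha>_gt by auto
  fix z assume "z \<in> pimg cvtop pr (f^^n) (Pset D)"
  then obtain T where T: "T \<in> cv" "pr T \<in> Pset D" "z = pr ((f^^n) T)" unfolding pimg_def by auto
  have D: "(I T b, I T a) \<in> D" using T mem_Pset assms by auto
  have "I T a = I ((f^^n) T) a / \<alpha>^n" using fpow_a[OF T(1), of n] ap \<alpha>_gt by (simp add: field_simps)
  then show "z \<in> Pset {p. (\<beta>^n * fst p, snd p / \<alpha>^n) \<in> D}"
    unfolding Pset_def using D T fpow_b[OF T(1), of n] fpow_in by auto
next
  have ap: "\<alpha>^n > 0" using \<alpha>_gt by auto
  fix z assume "z \<in> Pset {p. (\<beta>^n * fst p, snd p / \<alpha>^n) \<in> D}"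
  then obtain S where S: "S \<in> cv" "z = pr S" "(\<beta>^n * I S b, I S a / \<alpha>^n) \<in> D" unfolding Pset_def by auto
  define T where "T = (g^^n) S"
  have T: "T \<in> cv" "(f^^n) T = S" using S gpow_in fgpow T_def by auto
  have "I T a = I S a / \<alpha>^n" using gpow_a[OF S(1), of n] ap \<alpha>_gt T_def by (simp add: field_simps)
  then have "(I T b, I T a) \<in> D" using S gpow_b T_def by auto
  then have "pr T \<in> Pset D" using T unfolding Pset_def by auto
  then show "z \<in> pimg cvtop pr (f^^n) (Pset D)" unfolding pimg_def using T S by auto
qed

lemma img_g:
  assumes "pcone D"
  shows "pimg cvtop pr (g^^n) (Pset D) = Pset {p. (fst p / \<beta>^n, \<alpha>^n * snd p) \<in> D}"
proof (intro set_eqI iffI)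
  have bp: "\<beta>^n > 0" using \<beta>_gt by auto
  fix z assume "z \<in> pimg cvtop pr (g^^n) (Pset D)"
  then obtain T where T: "T \<in> cv" "pr T \<in> Pset D" "z = pr ((g^^n) T)" unfolding pimg_def by auto
  have D: "(I T b, I T a) \<in> D" using T mem_Pset assms by auto
  have "I T b = I ((g^^n) T) b / \<beta>^n" using gpow_b[OF T(1), of n] bp \<beta>_gt by (simp add: field_simps)
  then show "z \<in> Pset {p. (fst p / \<beta>^n, \<alpha>^n * snd p) \<in> D}"
    unfolding Pset_def using D T gpow_a[OF T(1), of n] gpow_in by auto
next
  have bp: "\<beta>^n > 0" using \<beta>_gt by auto
  fix z assume "z \<in> Pset {p. (fst p / \<beta>^n, \<alpha>^n * snd p) \<in> D}"
  then obtain S where S: "S \<in> cv" "z = pr S" "(I S b / \<beta>^n, \<alpha>^n * I S a) \<in> D" unfolding Pset_def by auto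
  define T where "T = (f^^n) S"
  have T: "T \<in> cv" "(g^^n) T = S" using S fpow_in gfpow T_def by auto
  have "I T b = I S b / \<beta>^n" using fpow_b[OF S(1), of n] bp \<beta>_gt T_def by (simp add: field_simps)
  then have "(I T b, I T a) \<in> D" using S fpow_a T_def by auto
  then have "pr T \<in> Pset D" using T unfolding Pset_def by auto
  then show "z \<in> pimg cvtop pr (g^^n) (Pset D)" unfolding pimg_def using T S by auto
qed

lemma ab_pos: "\<alpha>^n > 0" "\<beta>^n > 0" "\<alpha>*\<beta> > 1"
  using \<alpha>_gt \<beta>_gt by (auto simp: less_1_mult)

lemma set_f_LT: "{p. (\<beta>^n * fst p, snd p / \<alpha>^n) \<in> LT u v} = LT (u*(\<alpha>*\<beta>)^n) v"
proof -
  have A: "\<alpha>^n > 0" using ab_pos by simp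
  show ?thesis unfolding LT_def
    using A by (auto simp: power_mult_distrib field_simps)
qed
lemma set_f_LE: "{p. (\<beta>^n * fst p, snd p / \<alpha>^n) \<in> LE u v} = LE (u*(\<alpha>*\<beta>)^n) v"
proof -
  have A: "\<alpha>^n > 0" using ab_pos by simp
  show ?thesis unfolding LE_def
    using A by (auto simp: power_mult_distrib field_simps)
qed
lemma set_g_LT: "{p. (fst p / \<beta>^n, \<alpha>^n * snd p) \<in> LT u v} = LT u (v * (\<alpha>*\<beta>)^n)"
proof -
  have A: "\<beta>^n > 0" using ab_pos by simp
  show ?thesis unfolding LT_def
    using A by (auto simp: power_mult_distrib field_simps)
qed
lemma set_g_LE: "{p. (fst p / \<beta>^n, \<alpha>^n * snd p) \<in> LE u v} = LE u (v * (\<alpha>*\<beta>)^n)"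
proof -
  have A: "\<beta>^n > 0" using ab_pos by simp
  show ?thesis unfolding LE_def
    using A by (auto simp: power_mult_distrib field_simps)
qed

lemma imf_LT: "pimg cvtop pr (f^^n) (Pset (LT u v)) = Pset (LT (u*(\<alpha>*\<beta>)^n) v)"
  using img_f[OF pcone_LT] set_f_LT by simp
lemma imf_LE: "pimg cvtop pr (f^^n) (Pset (LE u v)) = Pset (LE (u*(\<alpha>*\<beta>)^n) v)"
  using img_f[OF pcone_LE] set_f_LE by simp
lemma img_LT: "pimg cvtop pr (g^^n) (Pset (LT u v)) = Pset (LT u (v * (\<alpha>*\<beta>)^n))"
  using img_g[OF pcone_LT] set_g_LT by simp
lemma img_LE: "pimg cvtop pr (g^^n) (Pset (LE u v)) = Pset (LE u (v * (\<alpha>*\<beta>)^n))"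
  using img_g[OF pcone_LE] set_g_LE by simp

lemma Tp_ab: "I Tp b = 0" "I Tp a > 0"
  using zero_b[OF Tp_in] zero_a[OF Tp_in] nn_a[OF Tp_in] dist by auto
lemma Tm_ab: "I Tm a = 0" "I Tm b > 0"
  using zero_b[OF Tm_in] zero_a[OF Tm_in] nn_b[OF Tm_in] dist by auto

lemma key:
  assumes U: "openin PT U" "pr Tp \<in> U"
  shows "\<exists>N. Pset (LE ((\<alpha>*\<beta>)^N) 1) \<subseteq> U"
proof -
  define r where "r = \<alpha>*\<beta>"
  have r1: "r > 1" using ab_pos r_def by simp
  define W where "W n = U \<union> Pset (LT (-(r^n)) (-1))" for n
  have Wo: "openin PT (W n)" for n
    unfolding W_def by (intro openin_Un U(1) open_Pset pcone_LT open_LT)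
  have Wm: "W m \<subseteq> W n" if "m \<le> n" for m n
  proof -
    have "Pset (LT (-(r^m)) (-1)) \<subseteq> Pset (LT (-(r^n)) (-1))"
    proof (rule Pset_mono)
      fix x y :: real assume "x \<ge> 0" "y \<ge> 0" "(x,y) \<in> LT (-(r^m)) (-1)"
      moreover have "r^m \<le> r^n" using r1 that by (simp add: power_increasing)
      ultimately have "r^m * x \<le> r^n * x" "y < r^m * x" unfolding LT_def
        by (auto intro: mult_right_mono)
      then show "(x,y) \<in> LT (-(r^n)) (-1)" unfolding LT_def by simp
    qed
    then show ?thesis unfolding W_def by auto
  qed
  have cov: "topspace PT \<subseteq> (\<Union>n. W n)"
  proof
    fix z assume "z \<in> topspace PT"
    then obtain S where S: "S \<in> cv" "z = pr S" using top_eq by auto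
    show "z \<in> (\<Union>n. W n)"
    proof (cases "I S b = 0")
      case True
      then have "z = pr Tp" using zero_b S by auto
      then show ?thesis unfolding W_def using U(2) by blast
    next
      case False
      then have x: "I S b > 0" using nn_b S by (simp add: less_le)
      obtain n where "I S a / I S b < r^n" using real_arch_pow r1 by blast
      then have "I S a < r^n * I S b" using x by (simp add: field_simps)
      then have "(I S b, I S a) \<in> LT (-(r^n)) (-1)" unfolding LT_def by simp
      then have "pr S \<in> Pset (LT (-(r^n)) (-1))" using mem_Pset[OF S(1) pcone_LT] by simp
      then show ?thesis unfolding W_def using S(2) by blast
    qed
  qed
  have cK: "compactin PT (topspace PT)" using compact unfolding compact_space_def .
  have "\<exists>N. topspace PT \<subseteq> W N"
    apply (rule compact_incr[OF cK])
      apply (rule Wo)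
     apply (erule Wm)
    apply (rule cov)
    done
  then obtain N where N: "topspace PT \<subseteq> W N" by blast
  have "Pset (LE (r^N) 1) \<subseteq> U"
  proof
    fix z assume z: "z \<in> Pset (LE (r^N) 1)"
    then obtain S where S: "S \<in> cv" "z = pr S" "r^N * I S b \<le> I S a" unfolding Pset_def LE_def by auto
    have "(I S b, I S a) \<notin> LT (-(r^N)) (-1)" unfolding LT_def using S by simp
    then have "z \<notin> Pset (LT (-(r^N)) (-1))"
      using S mem_Pset[OF S(1) pcone_LT] by simp
    then show "z \<in> U" using N z Pset_sub W_def by auto
  qed
  then show ?thesis by (intro exI[of _ N]) (simp add: r_def)
qed

abbreviation "V \<equiv> Pset (LT 1 1)"

lemma R1: "\<alpha>*\<beta> > 1" using ab_pos by simp

lemma V_open: "openin PT V" by (rule open_Pset[OF pcone_LT open_LT])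

lemma Tp_LT: "v > 0 \<Longrightarrow> pr Tp \<in> Pset (LT u v)"
  using mem_Pset[OF Tp_in pcone_LT] Tp_ab unfolding LT_def by simp

lemma Tp_V: "pr Tp \<in> V" using Tp_LT by simp

lemma V_inv: "pimg cvtop pr f V \<subseteq> V"
proof -
  have "f = f^^1" by simp
  then have "pimg cvtop pr f V = Pset (LT (\<alpha>*\<beta>) 1)" using imf_LT[of 1 1 1] by simp
  also have "\<dots> \<subseteq> V"
  proof (rule Pset_mono)
    fix x y :: real assume "x \<ge> 0" "y \<ge> 0" "(x,y) \<in> LT (\<alpha>*\<beta>) 1"
    moreover have "x \<le> (\<alpha>*\<beta>) * x" using mult_right_mono[of 1 "\<alpha>*\<beta>" x] R1 \<open>x \<ge> 0\<close> by simp
    ultimately have "x \<le> (\<alpha>*\<beta>) * x" "(\<alpha>*\<beta>) * x < y" unfolding LT_def by auto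
    then show "(x,y) \<in> LT 1 1" unfolding LT_def by simp
  qed
  finally show ?thesis .
qed

lemma part2: "(\<Inter>n\<in>{1..}. pimg cvtop pr (f^^n) (PT closure_of V)) = {pr Tp}"
proof -
  define R where "R = \<alpha>*\<beta>"
  have R: "R > 1" using R1 R_def by simp
  have cl: "PT closure_of V \<subseteq> Pset (LE 1 1)"
    by (rule closure_of_minimal[OF _ closed_Pset_LE]) (rule Pset_mono, auto simp: LT_def LE_def)
  have sub: "pimg cvtop pr (f^^n) (PT closure_of V) \<subseteq> Pset (LE (R^n) 1)" for n
    using pimg_mono[OF cl, of "f^^n"] imf_LE[of n 1 1] R_def by simp
  have sup: "pr Tp \<in> pimg cvtop pr (f^^n) (PT closure_of V)" for n
    using pimg_mono[OF closure_of_subset[OF Pset_sub[of "LT 1 1"]], of "f^^n"] imf_LT[of n 1 1] Tp_LT[of 1] by auto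
  show ?thesis
  proof (intro equalityI subsetI)
    fix z assume z: "z \<in> (\<Inter>n\<in>{1..}. pimg cvtop pr (f^^n) (PT closure_of V))"
    have "z \<in> pimg cvtop pr (f^^1) (PT closure_of V)" using z by blast
    then have "z \<in> Pset (LE (R^1) 1)" using sub[of 1] by blast
    then obtain S where S: "S \<in> cv" "z = pr S" unfolding Pset_def by auto
    have all: "R^n * I S b \<le> I S a" if "n \<ge> 1" for n
    proof -
      have "z \<in> Pset (LE (R^n) 1)" using z sub[of n] that by auto
      then have "(I S b, I S a) \<in> LE (R^n) 1" using mem_Pset[OF S(1) pcone_LE] S(2) by simp
      then show ?thesis unfolding LE_def by simp
    qed
    have "I S b = 0"
    proof (rule ccontr)
      assume "I S b \<noteq> 0"
      then have "I S b > 0" using nn_b[OF S(1)] by simp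
      then obtain n where "I S a < R^n * I S b" using arch'[OF R] by blast
      moreover have "R^n * I S b \<le> R^(Suc n) * I S b" using ar1[OF R nn_b[OF S(1)], of n "Suc n"] by simp
      ultimately show False using all[of "Suc n"] by simp
    qed
    then show "z \<in> {pr Tp}" using zero_b[OF S(1)] S by simp
  next
    fix z assume "z \<in> {pr Tp}"
    then show "z \<in> (\<Inter>n\<in>{1..}. pimg cvtop pr (f^^n) (PT closure_of V))" using sup by auto
  qed
qed

lemma part3:
  assumes "nbhd PT (pr Tp) W"
  shows "\<exists>n\<ge>1. pimg cvtop pr (f^^n) V \<subseteq> W"
proof -
  define R where "R = \<alpha>*\<beta>"
  have R: "R > 1" using R1 R_def by simp
  obtain U where U: "openin PT U" "pr Tp \<in> U" "U \<subseteq> W" using assms unfolding nbhd_def by blast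
  obtain N where N: "Pset (LE (R^N) 1) \<subseteq> U" using key[OF U(1,2)] R_def by blast
  have "pimg cvtop pr (f^^Suc N) V = Pset (LT (R^Suc N) 1)" using imf_LT[of "Suc N" 1 1] R_def by simp
  also have "\<dots> \<subseteq> Pset (LE (R^N) 1)"
  proof (rule Pset_mono)
    fix x y :: real assume "x \<ge> 0" "y \<ge> 0" "(x,y) \<in> LT (R^Suc N) 1"
    moreover have "R^N * x \<le> R^Suc N * x" using ar1[OF R \<open>x \<ge> 0\<close>, of N "Suc N"] by simp
    ultimately show "(x,y) \<in> LE (R^N) 1" unfolding LT_def LE_def by simp
  qed
  finally show ?thesis using N U(3) by (intro exI[of _ "Suc N"]) auto
qed

lemma part4:
  assumes "nbhd PT (pr Tp) W" "nbhd PT (pr Tm) W'"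
  shows "\<exists>M. \<forall>n\<ge>M. pimg cvtop pr (f^^n) (topspace PT - W') \<subseteq> W"
proof -
  define R where "R = \<alpha>*\<beta>"
  have R: "R > 1" using R1 R_def by simp
  obtain U where U: "openin PT U" "pr Tp \<in> U" "U \<subseteq> W" using assms(1) unfolding nbhd_def by blast
  obtain U' where U': "openin PT U'" "pr Tm \<in> U'" "U' \<subseteq> W'" using assms(2) unfolding nbhd_def by blast
  obtain N where N: "Pset (LE (R^N) 1) \<subseteq> U" using key[OF U(1,2)] R_def by blast
  define K where "K = topspace PT - U'"
  have cK: "compactin PT K" unfolding K_def
    by (rule closedin_compact_space[OF compact]) (use U'(1) in blast)
  define Q where "Q k = Pset (LT 1 (R^k))" for k
  have Qo: "openin PT (Q k)" for k unfolding Q_def by (rule open_Pset[OF pcone_LT open_LT])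
  have Qm: "Q m \<subseteq> Q n" if "m \<le> n" for m n
    unfolding Q_def
  proof (rule Pset_mono)
    fix x y :: real assume "x \<ge> 0" "y \<ge> 0" "(x,y) \<in> LT 1 (R^m)"
    moreover have "R^m * y \<le> R^n * y" using ar1[OF R \<open>y \<ge> 0\<close> that] .
    ultimately show "(x,y) \<in> LT 1 (R^n)" unfolding LT_def by simp
  qed
  have cov: "K \<subseteq> (\<Union>k. Q k)"
  proof
    fix z assume z: "z \<in> K"
    then obtain S where S: "S \<in> cv" "z = pr S" unfolding K_def using top_eq by auto
    have "pr S \<noteq> pr Tm" using z S U'(2) K_def by auto
    then have "I S a > 0" using zero_a[OF S(1)] nn_a[OF S(1)] by (simp add: less_le)
    then obtain k where "I S b < R^k * I S a" using arch'[OF R] by blast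
    then have "(I S b, I S a) \<in> LT 1 (R^k)" unfolding LT_def by simp
    then have "pr S \<in> Q k" unfolding Q_def using mem_Pset[OF S(1) pcone_LT] by simp
    then show "z \<in> (\<Union>k. Q k)" using S by auto
  qed
  have "\<exists>k. K \<subseteq> Q k"
    apply (rule compact_incr[OF cK])
      apply (rule Qo)
     apply (erule Qm)
    apply (rule cov)
    done
  then obtain k where k: "K \<subseteq> Q k" by blast
  have "pimg cvtop pr (f^^n) (topspace PT - W') \<subseteq> W" if n: "n \<ge> N + k" for n
  proof -
    have "topspace PT - W' \<subseteq> Q k" using k U'(3) K_def by auto
    then have "pimg cvtop pr (f^^n) (topspace PT - W') \<subseteq> pimg cvtop pr (f^^n) (Q k)"
      by (rule pimg_mono)
    also have "\<dots> = Pset (LT (R^n) (R^k))"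
      using imf_LT[of n 1 "R^k"] Q_def R_def by simp
    also have "\<dots> \<subseteq> Pset (LE (R^N) 1)"
    proof (rule Pset_mono)
      fix x y :: real assume "x \<ge> 0" "y \<ge> 0" "(x,y) \<in> LT (R^n) (R^k)"
      then show "(x,y) \<in> LE (R^N) 1" using ar2[OF R \<open>x \<ge> 0\<close> _ n] unfolding LT_def LE_def by simp
    qed
    finally show ?thesis using N U(3) by auto
  qed
  then show ?thesis by blast
qed

abbreviation "Y \<equiv> topspace PT - {pr Tp, pr Tm}"

lemma Y_pos:
  assumes "S \<in> cv" "pr S \<in> Y" shows "I S a > 0" "I S b > 0"
  using assms zero_a[OF assms(1)] zero_b[OF assms(1)] nn_a[OF assms(1)] nn_b[OF assms(1)]
  by (auto simp: less_le)

lemma Y_of_pos: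
  assumes "S \<in> cv" "I S a \<noteq> 0" "I S b \<noteq> 0" shows "pr S \<in> Y"
  using assms zero_a[OF assms(1)] zero_b[OF assms(1)] pr_in[OF assms(1)] by auto

lemma pd: "properly_discontinuous PT (\<lambda>n. pimg cvtop pr (zpow f g n)) Y"
  unfolding properly_discontinuous_def
proof (intro allI impI)
  fix K assume K: "compactin PT K \<and> K \<subseteq> Y"
  define R where "R = \<alpha>*\<beta>"
  have R: "R > 1" using R1 R_def by simp
  define W where "W k = Pset (LT 1 (R^k)) \<inter> Pset (LT (-(R^k)) (-1))" for k
  have Wo: "openin PT (W k)" for k
    unfolding W_def by (intro openin_Int open_Pset pcone_LT open_LT)
  have Wm: "W m \<subseteq> W n" if "m \<le> n" for m n
  proof -
    have "Pset (LT 1 (R^m)) \<subseteq> Pset (LT 1 (R^n))"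
    proof (rule Pset_mono)
      fix x y :: real assume "x \<ge> 0" "y \<ge> 0" "(x,y) \<in> LT 1 (R^m)"
      moreover have "R^m * y \<le> R^n * y" using ar1[OF R \<open>y \<ge> 0\<close> that] .
      ultimately show "(x,y) \<in> LT 1 (R^n)" unfolding LT_def by simp
    qed
    moreover have "Pset (LT (-(R^m)) (-1)) \<subseteq> Pset (LT (-(R^n)) (-1))"
    proof (rule Pset_mono)
      fix x y :: real assume "x \<ge> 0" "y \<ge> 0" "(x,y) \<in> LT (-(R^m)) (-1)"
      moreover have "R^m * x \<le> R^n * x" using ar1[OF R \<open>x \<ge> 0\<close> that] .
      ultimately show "(x,y) \<in> LT (-(R^n)) (-1)" unfolding LT_def by simp
    qed
    ultimately show ?thesis unfolding W_def by blast
  qed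
  have cov: "K \<subseteq> (\<Union>k. W k)"
  proof
    fix z assume z: "z \<in> K"
    then have zY: "z \<in> Y" using K by blast
    then obtain S where S: "S \<in> cv" "z = pr S" using top_eq by auto
    have xa: "I S a > 0" "I S b > 0" using Y_pos[OF S(1)] zY S(2) by auto
    obtain k1 where k1: "I S b < R^k1 * I S a" using arch'[OF R xa(1)] by blast
    obtain k2 where k2: "I S a < R^k2 * I S b" using arch'[OF R xa(2)] by blast
    have "R^k1 * I S a \<le> R^(k1+k2) * I S a" "R^k2 * I S b \<le> R^(k1+k2) * I S b"
      using ar1[OF R] xa by (auto simp: less_imp_le)
    then have "(I S b, I S a) \<in> LT 1 (R^(k1+k2))" "(I S b, I S a) \<in> LT (-(R^(k1+k2))) (-1)"
      using k1 k2 unfolding LT_def by auto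
    then have "pr S \<in> W (k1+k2)" unfolding W_def using mem_Pset[OF S(1) pcone_LT] by simp
    then show "z \<in> (\<Union>k. W k)" using S by auto
  qed
  have "\<exists>k. K \<subseteq> W k"
    apply (rule compact_incr)
       apply (rule K[THEN conjunct1])
      apply (rule Wo)
     apply (erule Wm)
    apply (rule cov)
    done
  then obtain k where k: "K \<subseteq> W k" by blast
  have "{n. pimg cvtop pr (zpow f g n) K \<inter> K \<noteq> {}} \<subseteq> {-2*int k..2*int k}"
  proof
    fix n assume "n \<in> {n. pimg cvtop pr (zpow f g n) K \<inter> K \<noteq> {}}"
    then obtain z where z: "z \<in> pimg cvtop pr (zpow f g n) K" "z \<in> K" by blast
    show "n \<in> {-2*int k..2*int k}"
    proof (cases "n \<ge> 0")
      case True
      define m where "m = nat n"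
      have "zpow f g n = f^^m" using True m_def by (simp add: zpow_def)
      then have "z \<in> pimg cvtop pr (f^^m) (Pset (LT 1 (R^k)))"
        using z(1) pimg_mono[of K "Pset (LT 1 (R^k))" "f^^m"] k W_def by auto
      then have "z \<in> Pset (LT (R^m) (R^k))" using imf_LT[of m 1 "R^k"] R_def by simp
      then obtain S where S: "S \<in> cv" "z = pr S" "R^m * I S b < R^k * I S a"
        unfolding Pset_def LT_def by auto
      have "z \<in> Pset (LT (-(R^k)) (-1))" using z(2) k W_def by auto
      then have "(I S b, I S a) \<in> LT (-(R^k)) (-1)" using mem_Pset[OF S(1) pcone_LT] S(2) by simp
      then have "I S a < R^k * I S b" unfolding LT_def by simp
      then have "m < 2*k" using ar3[OF R nn_b[OF S(1)] nn_a[OF S(1)] S(3)] by simp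
      then show ?thesis using True m_def by auto
    next
      case False
      define m where "m = nat (-n)"
      have "zpow f g n = g^^m" using False m_def by (simp add: zpow_def)
      then have "z \<in> pimg cvtop pr (g^^m) (Pset (LT (-(R^k)) (-1)))"
        using z(1) pimg_mono[of K "Pset (LT (-(R^k)) (-1))" "g^^m"] k W_def by auto
      then have "z \<in> Pset (LT (-(R^k)) (-1 * R^m))" using img_LT[of m "-(R^k)" "-1"] R_def by simp
      then obtain S where S: "S \<in> cv" "z = pr S" "R^m * I S a < R^k * I S b"
        unfolding Pset_def LT_def by auto
      have "z \<in> Pset (LT 1 (R^k))" using z(2) k W_def by auto
      then have "(I S b, I S a) \<in> LT 1 (R^k)" using mem_Pset[OF S(1) pcone_LT] S(2) by simp
      then have "I S b < R^k * I S a" unfolding LT_def by simp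
      then have "m < 2*k" using ar3[OF R nn_a[OF S(1)] nn_b[OF S(1)] S(3)] by simp
      then show ?thesis using False m_def by auto
    qed
  qed
  then show "finite {n. pimg cvtop pr (zpow f g n) K \<inter> K \<noteq> {}}"
    by (rule finite_subset) simp
qed

lemma cc: "cocompact PT (\<lambda>n. pimg cvtop pr (zpow f g n)) Y"
  unfolding cocompact_def
proof (intro exI conjI)
  define R where "R = \<alpha>*\<beta>"
  have R: "R > 1" using R1 R_def by simp
  define K where "K = Pset (LE (-R) (-1)) \<inter> Pset (LE 1 1)"
  show "compactin PT K" unfolding K_def
    by (intro closedin_compact_space[OF compact] closedin_Int closed_Pset_LE)
  have memK: "pr T \<in> K \<longleftrightarrow> I T a \<le> R * I T b \<and> I T b \<le> I T a" if "T \<in> cv" for T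
  proof -
    have "pr T \<in> K \<longleftrightarrow> (I T b, I T a) \<in> LE (-R) (-1) \<and> (I T b, I T a) \<in> LE 1 1"
      unfolding K_def using mem_Pset[OF that pcone_LE] by simp
    then show ?thesis unfolding LE_def by auto
  qed
  have KY: "K \<subseteq> Y"
  proof
    fix z assume z: "z \<in> K"
    then obtain S where S: "S \<in> cv" "z = pr S" unfolding K_def Pset_def by auto
    have c: "I S a \<le> R * I S b" "I S b \<le> I S a" using memK[OF S(1)] z S(2) by auto
    have "I S a \<noteq> 0"
    proof
      assume "I S a = 0"
      then have "I S b = 0" using c nn_b[OF S(1)] by simp
      then show False using \<open>I S a = 0\<close> zero_a[OF S(1)] zero_b[OF S(1)] dist by simp
    qed
    moreover have "I S b \<noteq> 0"
    proof
      assume "I S b = 0"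
      then have "I S a = 0" using c nn_a[OF S(1)] by simp
      then show False using \<open>I S b = 0\<close> zero_a[OF S(1)] zero_b[OF S(1)] dist by simp
    qed
    ultimately show "z \<in> Y" using Y_of_pos[OF S(1)] S(2) by simp
  qed
  then show "K \<subseteq> Y" .
  show "(\<Union>n. pimg cvtop pr (zpow f g n) K) = Y"
  proof (intro equalityI subsetI)
    fix z assume "z \<in> (\<Union>n. pimg cvtop pr (zpow f g n) K)"
    then obtain n T where T: "T \<in> cv" "pr T \<in> K" "z = pr (zpow f g n T)"
      unfolding pimg_def by auto
    have p: "I T a > 0" "I T b > 0" using Y_pos[OF T(1)] KY T(2) by auto
    show "z \<in> Y"
    proof (cases "n \<ge> 0")
      case True
      define m where "m = nat n"
      have e: "zpow f g n = f^^m" using True m_def by (simp add: zpow_def)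
      have "\<alpha>^m * I T a > 0" by (rule mult_pos_pos[OF ab_pos(1) p(1)])
      then have "I ((f^^m) T) a \<noteq> 0" using fpow_a[OF T(1), of m] by linarith
      moreover have "I ((f^^m) T) b \<noteq> 0" using fpow_b[OF T(1), of m] p by auto
      ultimately show ?thesis using Y_of_pos[OF fpow_in[OF T(1)]] T(3) e by simp
    next
      case False
      define m where "m = nat (-n)"
      have e: "zpow f g n = g^^m" using False m_def by (simp add: zpow_def)
      have "I ((g^^m) T) a \<noteq> 0" using gpow_a[OF T(1), of m] p by auto
      moreover have "\<beta>^m * I T b > 0" by (rule mult_pos_pos[OF ab_pos(2) p(2)])
      then have "I ((g^^m) T) b \<noteq> 0" using gpow_b[OF T(1), of m] by linarith
      ultimately show ?thesis using Y_of_pos[OF gpow_in[OF T(1)]] T(3) e by simp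
    qed
  next
    fix z assume zY: "z \<in> Y"
    then obtain S where S: "S \<in> cv" "z = pr S" using top_eq by auto
    have xa: "I S a > 0" "I S b > 0" using Y_pos[OF S(1)] zY S(2) by auto
    show "z \<in> (\<Union>n. pimg cvtop pr (zpow f g n) K)"
    proof (cases "I S b \<le> I S a")
      case True
      obtain j where j: "I S a < R^j * I S b" using arch'[OF R xa(2)] by blast
      obtain k where k: "k \<le> j" "\<forall>i<k. \<not> I S a < R^i * I S b" "I S a < R^k * I S b"
        using ex_least_nat_le[of "\<lambda>j. I S a < R^j * I S b", OF j] by blast
      have "k \<noteq> 0" using k(3) True by (cases k) auto
      then obtain m where m: "k = Suc m" by (cases k) auto
      have m1: "R^m * I S b \<le> I S a" using k(2) m by auto
      have m2: "I S a < R * (R^m * I S b)" using k(3) m by (simp add: mult.assoc)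
      define T where "T = (g^^m) S"
      have T: "T \<in> cv" using gpow_in[OF S(1)] T_def by simp
      have Tb: "I T b = \<beta>^m * I S b" using gpow_b[OF S(1)] T_def by simp
      have Ta: "I S a = \<alpha>^m * I T a" using gpow_a[OF S(1)] T_def by simp
      have Rm: "R^m = \<alpha>^m * \<beta>^m" using R_def by (simp add: power_mult_distrib)
      have A: "\<alpha>^m > 0" using ab_pos by simp
      have "\<alpha>^m * I T b \<le> \<alpha>^m * I T a" using m1 Tb Ta Rm by (simp add: mult.assoc mult.left_commute)
      then have c2: "I T b \<le> I T a" using A by simp
      have "\<alpha>^m * I T a < \<alpha>^m * (R * I T b)" using m2 Tb Ta Rm by (simp add: mult.assoc mult.left_commute)
      then have c1: "I T a \<le> R * I T b" using A by simp
      have "pr T \<in> K" using memK[OF T] c1 c2 by simp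
      moreover have "zpow f g (int m) T = S" using fgpow[OF S(1)] T_def by (simp add: zpow_def)
      ultimately have "z \<in> pimg cvtop pr (zpow f g (int m)) K"
        unfolding pimg_def using T S(2) by force
      then show ?thesis by blast
    next
      case False
      obtain j where j: "I S b < R^j * I S a" using arch'[OF R xa(1)] by blast
      obtain k where k: "k \<le> j" "\<forall>i<k. \<not> I S b \<le> R^i * I S a" "I S b \<le> R^k * I S a"
        using ex_least_nat_le[of "\<lambda>j. I S b \<le> R^j * I S a", OF less_imp_le[OF j]] by blast
      have "k \<noteq> 0" using k(3) False by (cases k) auto
      then obtain m where m: "k = Suc m" by (cases k) auto
      have m1: "R^m * I S a < I S b" using k(2) m by (auto simp: not_le)
      have m2: "I S b \<le> R * (R^m * I S a)" using k(3) m by (simp add: mult.assoc)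
      define T where "T = (f^^k) S"
      have T: "T \<in> cv" using fpow_in[OF S(1)] T_def by simp
      have Ta: "I T a = \<alpha>^k * I S a" using fpow_a[OF S(1)] T_def by simp
      have Tb: "I S b = \<beta>^k * I T b" using fpow_b[OF S(1)] T_def by simp
      have Rk: "R^k = \<alpha>^k * \<beta>^k" using R_def by (simp add: power_mult_distrib)
      have B: "\<beta>^k > 0" using ab_pos by simp
      have Rs: "R * R^m = R^k" using m by simp
      have "\<beta>^k * I T b \<le> \<beta>^k * I T a" using m2 Ta Tb Rk Rs
        by (simp add: mult.assoc[symmetric] mult.commute[of "\<beta>^k"])
      then have c2: "I T b \<le> I T a" using B by simp
      have "R * (R^m * I S a) < R * I S b" using m1 R by simp
      then have "\<beta>^k * I T a < \<beta>^k * (R * I T b)" using Ta Tb Rk Rs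
        by (simp add: mult.assoc[symmetric]) (simp add: mult.assoc mult.commute mult.left_commute)
      then have c1: "I T a \<le> R * I T b" using B by simp
      have "pr T \<in> K" using memK[OF T] c1 c2 by simp
      moreover have "zpow f g (- int k) T = (g^^k) T" using \<open>k \<noteq> 0\<close> by (simp add: zpow_def)
      then have "zpow f g (- int k) T = S" using gfpow[OF S(1), of k] T_def by simp
      ultimately have "z \<in> pimg cvtop pr (zpow f g (- int k)) K"
        unfolding pimg_def using T S(2) by force
      then show ?thesis by blast
    qed
  qed
qed

end
theorem proposition4p10:
  fixes cvtop :: "'T topology" and PT :: "'P topology" and pr :: "'T \<Rightarrow> 'P"
    and scal :: "real \<Rightarrow> 'T \<Rightarrow> 'T"
    and Ctop :: "'C topology" and scalC :: "real \<Rightarrow> 'C \<Rightarrow> 'C"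
    and I :: "'T \<Rightarrow> 'C \<Rightarrow> real"
    and act actinv :: "'T \<Rightarrow> 'T" and cact cactinv :: "'C \<Rightarrow> 'C"
    and Tp Tm :: 'T and mp mm :: 'C and lp lm :: real
    and Vp Vm :: "'P set"
  \<comment> \<open>projectivization: CV-bar is the quotient of cv by positive scaling; compact Hausdorff\<close>
  assumes scal_in: "\<And>c T. c > 0 \<Longrightarrow> T \<in> topspace cvtop \<Longrightarrow> scal c T \<in> topspace cvtop"
    and scal_mult: "\<And>c d T. scal c (scal d T) = scal (c * d) T"
    and scal_one: "\<And>T. scal 1 T = T"
    and quot: "quotient_map cvtop PT pr"
    and pr_eq: "\<And>S T. S \<in> topspace cvtop \<Longrightarrow> T \<in> topspace cvtop \<Longrightarrow>
                  pr S = pr T \<longleftrightarrow> (\<exists>c>0. S = scal c T)"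
    and compact: "compact_space PT"
    and hausdorff: "Hausdorff_space PT"
  \<comment> \<open>the intersection form\<close>
    and mp_in: "mp \<in> topspace Ctop" and mm_in: "mm \<in> topspace Ctop"
    and I_cont: "continuous_map (prod_topology cvtop Ctop) euclideanreal (\<lambda>(T, \<mu>). I T \<mu>)"
    and I_nonneg: "\<And>T \<mu>. T \<in> topspace cvtop \<Longrightarrow> \<mu> \<in> topspace Ctop \<Longrightarrow> I T \<mu> \<ge> 0"
    and I_scal: "\<And>c T \<mu>. c > 0 \<Longrightarrow> T \<in> topspace cvtop \<Longrightarrow> \<mu> \<in> topspace Ctop \<Longrightarrow>
                   I (scal c T) \<mu> = c * I T \<mu>"
    and I_scalC: "\<And>c T \<mu>. c \<ge> 0 \<Longrightarrow> T \<in> topspace cvtop \<Longrightarrow> \<mu> \<in> topspace Ctop \<Longrightarrow>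
                   scalC c \<mu> \<in> topspace Ctop \<and> I T (scalC c \<mu>) = c * I T \<mu>"
  \<comment> \<open>the outer automorphism phi acting on cv (right) and on currents (left)\<close>
    and act_cont: "continuous_map cvtop cvtop act"
    and actinv_cont: "continuous_map cvtop cvtop actinv"
    and act_inv1: "\<And>T. T \<in> topspace cvtop \<Longrightarrow> actinv (act T) = T"
    and act_inv2: "\<And>T. T \<in> topspace cvtop \<Longrightarrow> act (actinv T) = T"
    and act_scal: "\<And>c T. c > 0 \<Longrightarrow> T \<in> topspace cvtop \<Longrightarrow> act (scal c T) = scal c (act T)"
    and cact_in: "\<And>\<mu>. \<mu> \<in> topspace Ctop \<Longrightarrow> cact \<mu> \<in> topspace Ctop"
    and cactinv_in: "\<And>\<mu>. \<mu> \<in> topspace Ctop \<Longrightarrow> cactinv \<mu> \<in> topspace Ctop"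
    and cact_inv1: "\<And>\<mu>. \<mu> \<in> topspace Ctop \<Longrightarrow> cactinv (cact \<mu>) = \<mu>"
    and cact_inv2: "\<And>\<mu>. \<mu> \<in> topspace Ctop \<Longrightarrow> cact (cactinv \<mu>) = \<mu>"
    and cact_scal: "\<And>c \<mu>. c \<ge> 0 \<Longrightarrow> \<mu> \<in> topspace Ctop \<Longrightarrow> cact (scalC c \<mu>) = scalC c (cact \<mu>)"
    and cactinv_scal: "\<And>c \<mu>. c \<ge> 0 \<Longrightarrow> \<mu> \<in> topspace Ctop \<Longrightarrow> cactinv (scalC c \<mu>) = scalC c (cactinv \<mu>)"
    and I_equiv: "\<And>T \<mu>. T \<in> topspace cvtop \<Longrightarrow> \<mu> \<in> topspace Ctop \<Longrightarrow> I (act T) \<mu> = I T (cact \<mu>)"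
  \<comment> \<open>hyperbolic iwip data\<close>
    and Tp_in: "Tp \<in> topspace cvtop" and Tm_in: "Tm \<in> topspace cvtop"
    and lp_gt: "lp > 1" and lm_gt: "lm > 1"
    and Tp_eig: "act Tp = scal lp Tp"
    and Tm_eig: "act Tm = scal (1 / lm) Tm"
    and mp_eig: "cact mp = scalC lp mp"
    and mm_eig: "cactinv mm = scalC lm mm"
    and Tpm_distinct: "pr Tp \<noteq> pr Tm"
    and fixed_pts: "\<And>T. T \<in> topspace cvtop \<Longrightarrow>
                      pr (act T) = pr T \<longleftrightarrow> pr T = pr Tp \<or> pr T = pr Tm"
    and conv_plus: "\<And>T. T \<in> topspace cvtop \<Longrightarrow> pr T \<noteq> pr Tm \<Longrightarrow>
                      limitin PT (\<lambda>n. pr ((act ^^ n) T)) (pr Tp) sequentially"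
    and conv_minus: "\<And>T. T \<in> topspace cvtop \<Longrightarrow> pr T \<noteq> pr Tp \<Longrightarrow>
                      limitin PT (\<lambda>n. pr ((actinv ^^ n) T)) (pr Tm) sequentially"
    and zero_plus: "\<And>T. T \<in> topspace cvtop \<Longrightarrow> I T mp = 0 \<longleftrightarrow> pr T = pr Tm"
    and zero_minus: "\<And>T. T \<in> topspace cvtop \<Longrightarrow> I T mm = 0 \<longleftrightarrow> pr T = pr Tp"
  \<comment> \<open>the sets V_+ and V_-\<close>
    and Vp_def: "Vp = {pr T | T. T \<in> topspace cvtop \<and> I T mm < I T mp}"
    and Vm_def: "Vm = {pr T | T. T \<in> topspace cvtop \<and> I T mm > I T mp}"
  shows
    \<comment> \<open>(1)\<close>
    "(openin PT Vp \<and> pr Tp \<in> Vp \<and> openin PT Vm \<and> pr Tm \<in> Vm \<and>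
      pimg cvtop pr act Vp \<subseteq> Vp \<and> pimg cvtop pr actinv Vm \<subseteq> Vm)
   \<and> \<comment> \<open>(2)\<close>
     (\<Inter>n\<in>{1..}. pimg cvtop pr (act ^^ n) (PT closure_of Vp)) = {pr Tp}
   \<and> (\<Inter>n\<in>{1..}. pimg cvtop pr (actinv ^^ n) (PT closure_of Vm)) = {pr Tm}
   \<and> \<comment> \<open>(3)\<close>
     (\<forall>V. nbhd PT (pr Tp) V \<longrightarrow> (\<exists>n\<ge>1. pimg cvtop pr (act ^^ n) Vp \<subseteq> V))
   \<and> (\<forall>V'. nbhd PT (pr Tm) V' \<longrightarrow> (\<exists>n\<ge>1. pimg cvtop pr (actinv ^^ n) Vm \<subseteq> V'))
   \<and> \<comment> \<open>(4)\<close>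
     (\<forall>V V'. nbhd PT (pr Tp) V \<and> nbhd PT (pr Tm) V' \<longrightarrow>
        (\<exists>M\<ge>1. \<forall>n\<ge>M. pimg cvtop pr (act ^^ n) (topspace PT - V') \<subseteq> V \<and>
                       pimg cvtop pr (actinv ^^ n) (topspace PT - V) \<subseteq> V'))
   \<and> \<comment> \<open>(5)\<close>
     properly_discontinuous PT (\<lambda>n. pimg cvtop pr (zpow act actinv n))
        (topspace PT - {pr Tp, pr Tm})
   \<and> cocompact PT (\<lambda>n. pimg cvtop pr (zpow act actinv n)) (topspace PT - {pr Tp, pr Tm})"
proof -
  have cont1: "continuous_map cvtop euclideanreal (\<lambda>T. I T \<mu>)" if "\<mu> \<in> topspace Ctop" for \<mu>
  proof -
    have "continuous_map cvtop (prod_topology cvtop Ctop) (\<lambda>T. (T, \<mu>))"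
      using that by (intro continuous_map_pairedI) (auto simp: continuous_map_const)
    from continuous_map_compose[OF this I_cont] show ?thesis by (simp add: o_def)
  qed
  have act_in: "act T \<in> topspace cvtop" if "T \<in> topspace cvtop" for T
    using act_cont that unfolding continuous_map_def by blast
  have actinv_in: "actinv T \<in> topspace cvtop" if "T \<in> topspace cvtop" for T
    using actinv_cont that unfolding continuous_map_def by blast
  have fa: "I (act S) mp = lp * I S mp" if "S \<in> topspace cvtop" for S
    using I_equiv[OF that mp_in] mp_eig I_scalC[of lp S mp] lp_gt that mp_in by simp
  have gb: "I (actinv S) mm = lm * I S mm" if S: "S \<in> topspace cvtop" for S
  proof -
    have "I (act (actinv S)) (cactinv mm) = I (actinv S) (cact (cactinv mm))"
      using I_equiv[OF actinv_in[OF S] cactinv_in[OF mm_in]] .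
    then have "I S (cactinv mm) = I (actinv S) mm" using act_inv2[OF S] cact_inv2[OF mm_in] by simp
    moreover have "I S (cactinv mm) = lm * I S mm" using mm_eig I_scalC[of lm S mm] lm_gt S mm_in by simp
    ultimately show ?thesis by simp
  qed
  have fb: "I S mm = lm * I (act S) mm" if S: "S \<in> topspace cvtop" for S
    using gb[OF act_in[OF S]] act_inv1[OF S] by simp
  have ga: "I S mp = lp * I (actinv S) mp" if S: "S \<in> topspace cvtop" for S
    using fa[OF actinv_in[OF S]] act_inv2[OF S] by simp
  have sP: "side cvtop PT pr scal I act actinv mp mm lp lm Tp Tm"
    by (rule side.intro[OF quot pr_eq compact cont1[OF mp_in] cont1[OF mm_in]
          I_nonneg[OF _ mp_in] I_nonneg[OF _ mm_in] I_scal[OF _ _ mp_in] I_scal[OF _ _ mm_in]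
          act_in actinv_in act_inv2 act_inv1 fa fb ga gb Tp_in Tm_in zero_plus zero_minus
          Tpm_distinct lp_gt lm_gt])
  have sM: "side cvtop PT pr scal I actinv act mm mp lm lp Tm Tp"
    by (rule side.intro[OF quot pr_eq compact cont1[OF mm_in] cont1[OF mp_in]
          I_nonneg[OF _ mm_in] I_nonneg[OF _ mp_in] I_scal[OF _ _ mm_in] I_scal[OF _ _ mp_in]
          actinv_in act_in act_inv1 act_inv2 gb ga fb fa Tm_in Tp_in zero_minus zero_plus
          Tpm_distinct[symmetric] lm_gt lp_gt])
  interpret P: side cvtop PT pr scal I act actinv mp mm lp lm Tp Tm by (rule sP)
  interpret M: side cvtop PT pr scal I actinv act mm mp lm lp Tm Tp by (rule sM)
  have Vp: "Vp = P.Pset (LT 1 1)" unfolding Vp_def P.Pset_def LT_def by simp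
  have Vm: "Vm = M.Pset (LT 1 1)" unfolding Vm_def M.Pset_def LT_def by simp
  have c1: "openin PT Vp \<and> pr Tp \<in> Vp \<and> openin PT Vm \<and> pr Tm \<in> Vm \<and>
      pimg cvtop pr act Vp \<subseteq> Vp \<and> pimg cvtop pr actinv Vm \<subseteq> Vm"
    unfolding Vp Vm using P.V_open P.Tp_V P.V_inv M.V_open M.Tp_V M.V_inv by simp
  have c4: "\<forall>V V'. nbhd PT (pr Tp) V \<and> nbhd PT (pr Tm) V' \<longrightarrow>
        (\<exists>M\<ge>1. \<forall>n\<ge>M. pimg cvtop pr (act ^^ n) (topspace PT - V') \<subseteq> V \<and>
                       pimg cvtop pr (actinv ^^ n) (topspace PT - V) \<subseteq> V')"
  proof (intro allI impI)
    fix V V' assume VV: "nbhd PT (pr Tp) V \<and> nbhd PT (pr Tm) V'"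
    obtain M1 where M1: "\<forall>n\<ge>M1. pimg cvtop pr (act ^^ n) (topspace PT - V') \<subseteq> V"
      using P.part4 VV by blast
    obtain M2 where M2: "\<forall>n\<ge>M2. pimg cvtop pr (actinv ^^ n) (topspace PT - V) \<subseteq> V'"
      using M.part4 VV by blast
    show "\<exists>M\<ge>1. \<forall>n\<ge>M. pimg cvtop pr (act ^^ n) (topspace PT - V') \<subseteq> V \<and>
                       pimg cvtop pr (actinv ^^ n) (topspace PT - V) \<subseteq> V'"
      using M1 M2 by (intro exI[of _ "max (max M1 M2) 1"]) auto
  qed
  have c2: "(\<Inter>n\<in>{1..}. pimg cvtop pr (act ^^ n) (PT closure_of Vp)) = {pr Tp}"
    unfolding Vp by (rule P.part2)
  have c2': "(\<Inter>n\<in>{1..}. pimg cvtop pr (actinv ^^ n) (PT closure_of Vm)) = {pr Tm}"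
    unfolding Vm by (rule M.part2)
  have c3: "\<forall>V. nbhd PT (pr Tp) V \<longrightarrow> (\<exists>n\<ge>1. pimg cvtop pr (act ^^ n) Vp \<subseteq> V)"
    unfolding Vp using P.part3 by blast
  have c3': "\<forall>V'. nbhd PT (pr Tm) V' \<longrightarrow> (\<exists>n\<ge>1. pimg cvtop pr (actinv ^^ n) Vm \<subseteq> V')"
    unfolding Vm using M.part3 by blast
  show ?thesis
    by (intro conjI c1 c2 c2' c3 c3' c4 P.pd P.cc)
qed

end
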